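(* Let $n\ge2$, $g,h\in H_n\rtimes S_n$ and $r\in\mathbb{N}$, and let $j^1,\dots,j^u$ be representatives of $I^c_r(g)$. If $x_1,x_2\in H_n$ both satisfy $x_1^{-1}gx_1=h$ and $x_2^{-1}gx_2=h$, then $\sum_{s=1}^u t_{j^s}(x_1)=\sum_{s=1}^u t_{j^s}(x_2)$.
   Context: $\mathbb{N}=\{1,2,\dots\}$, $X_n=\{1,\dots,n\}\times\mathbb{N}$, permutations act on the right. $H_n$ is the group of bijections $g$ of $X_n$ with $z_i(g)\in\mathbb{N}$, $t_i(g)\in\mathbb{Z}$ such that $(i,m)g=(i,m+t_i(g))$ for all $m\ge z_i(g)$. $S_n$ acts by $(i,m)\sigma=(i\sigma,m)$; $H_n\rtimes S_n\le\mathrm{Sym}(X_n)$ is generated by $H_n$ and these; each $g$ is uniquely $\omega_g\sigma_g$ with $\omega_g\in H_n$, $\sigma_g\in S_n$, $t_i(g):=t_i(\omega_g)$. $[i]_g$ is the orbit of $i$ under $\langle\sigma_g\rangle$, $|[i]_g|$ its size, $t_{[i]}(g)=\sum_{k\in[i]_g}t_k(g)$, $I^c(g)=\{i: t_{[i]}(g)=0\}$, and $I^c_r(g)=\{j\in I^c(g): |[j]_g|=r\}$. Representatives $j^1,\dots,j^u$ of $I^c_r(g)$ are elements such that $I^c_r(g)=[j^1]_g\sqcup\dots\sqcup[j^u]_g$ (disjoint union). *)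

theory Defs
  imports "HOL-Combinatorics.Combinatorics"
begin

text \<open>Points of X_n are pairs (i,m) with 1 \<le> i \<le> n and m \<ge> 1.
  Bijections of X_n are represented as functions on nat \<times> nat that are the
  identity outside X_n. Permutations act on the right, so the product gh
  corresponds to the function composition h \<circ> g.\<close>

definition Xn :: "nat \<Rightarrow> (nat \<times> nat) set" where
  "Xn n = {1..n} \<times> {1..}"

definition Hn :: "nat \<Rightarrow> ((nat \<times> nat) \<Rightarrow> (nat \<times> nat)) set" where
  "Hn n = {g. bij_betw g (Xn n) (Xn n) \<and> (\<forall>p. p \<notin> Xn n \<longrightarrow> g p = p) \<and>
     (\<forall>i\<in>{1..n}. \<exists>z::nat. z \<ge> 1 \<and> (\<exists>t::int. \<forall>m\<ge>z.
        fst (g (i, m)) = i \<and> int (snd (g (i, m))) = int m + t))}"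

definition tH :: "nat \<Rightarrow> ((nat \<times> nat) \<Rightarrow> (nat \<times> nat)) \<Rightarrow> int" where
  "tH i g = (THE t. \<exists>z::nat. \<forall>m\<ge>z. fst (g (i, m)) = i \<and> int (snd (g (i, m))) = int m + t)"

definition liftS :: "nat \<Rightarrow> (nat \<Rightarrow> nat) \<Rightarrow> (nat \<times> nat) \<Rightarrow> (nat \<times> nat)" where
  "liftS n \<sigma> p = (if p \<in> Xn n then (\<sigma> (fst p), snd p) else p)"

definition prodHS :: "nat \<Rightarrow> ((nat \<times> nat) \<Rightarrow> (nat \<times> nat)) \<Rightarrow> (nat \<Rightarrow> nat) \<Rightarrow> (nat \<times> nat) \<Rightarrow> (nat \<times> nat)" where
  "prodHS n \<omega> \<sigma> = liftS n \<sigma> \<circ> \<omega>"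

definition HSn :: "nat \<Rightarrow> ((nat \<times> nat) \<Rightarrow> (nat \<times> nat)) set" where
  "HSn n = {g. \<exists>\<omega>\<in>Hn n. \<exists>\<sigma>. \<sigma> permutes {1..n} \<and> g = prodHS n \<omega> \<sigma>}"

definition omega_of :: "nat \<Rightarrow> ((nat \<times> nat) \<Rightarrow> (nat \<times> nat)) \<Rightarrow> (nat \<times> nat) \<Rightarrow> (nat \<times> nat)" where
  "omega_of n g = (THE \<omega>. \<omega> \<in> Hn n \<and> (\<exists>\<sigma>. \<sigma> permutes {1..n} \<and> g = prodHS n \<omega> \<sigma>))"

definition sigma_of :: "nat \<Rightarrow> ((nat \<times> nat) \<Rightarrow> (nat \<times> nat)) \<Rightarrow> nat \<Rightarrow> nat" where
  "sigma_of n g = (THE \<sigma>. \<sigma> permutes {1..n} \<and> (\<exists>\<omega>\<in>Hn n. g = prodHS n \<omega> \<sigma>))"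

definition tG :: "nat \<Rightarrow> nat \<Rightarrow> ((nat \<times> nat) \<Rightarrow> (nat \<times> nat)) \<Rightarrow> int" where
  "tG n i g = tH i (omega_of n g)"

definition cls :: "nat \<Rightarrow> ((nat \<times> nat) \<Rightarrow> (nat \<times> nat)) \<Rightarrow> nat \<Rightarrow> nat set" where
  "cls n g i = {(sigma_of n g ^^ k) i | k. True}"

definition tcls :: "nat \<Rightarrow> ((nat \<times> nat) \<Rightarrow> (nat \<times> nat)) \<Rightarrow> nat \<Rightarrow> int" where
  "tcls n g i = (\<Sum>k\<in>cls n g i. tG n k g)"

definition Ic :: "nat \<Rightarrow> ((nat \<times> nat) \<Rightarrow> (nat \<times> nat)) \<Rightarrow> nat set" where
  "Ic n g = {i\<in>{1..n}. tcls n g i = 0}"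

definition Icr :: "nat \<Rightarrow> ((nat \<times> nat) \<Rightarrow> (nat \<times> nat)) \<Rightarrow> nat \<Rightarrow> nat set" where
  "Icr n g r = {j\<in>Ic n g. card (cls n g j) = r}"

definition reps :: "nat \<Rightarrow> ((nat \<times> nat) \<Rightarrow> (nat \<times> nat)) \<Rightarrow> nat \<Rightarrow> (nat \<Rightarrow> nat) \<Rightarrow> nat \<Rightarrow> bool" where
  "reps n g r js u \<longleftrightarrow>
     Icr n g r = (\<Union>s\<in>{1..u}. cls n g (js s)) \<and>
     (\<forall>s\<in>{1..u}. \<forall>s'\<in>{1..u}. s \<noteq> s' \<longrightarrow> cls n g (js s) \<inter> cls n g (js s') = {})"

text \<open>x^{-1} g x = h, with right action: p(x^{-1} g x) = x(g(x^{-1}(p))).\<close>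
definition conj_eq :: "nat \<Rightarrow> ((nat \<times> nat) \<Rightarrow> (nat \<times> nat)) \<Rightarrow> ((nat \<times> nat) \<Rightarrow> (nat \<times> nat)) \<Rightarrow> ((nat \<times> nat) \<Rightarrow> (nat \<times> nat)) \<Rightarrow> bool" where
  "conj_eq n x g h \<longleftrightarrow> (\<forall>p\<in>Xn n. x (g (inv_into (Xn n) x p)) = h p)"

end

theory Submission
  imports Defs
begin


definition per :: "(nat \<Rightarrow> nat) \<Rightarrow> nat \<Rightarrow> nat" where
  "per \<sigma> i = (LEAST d. 0 < d \<and> (\<sigma> ^^ d) i = i)"

lemma per_props:
  assumes "permutation \<sigma>" shows "0 < per \<sigma> i \<and> (\<sigma> ^^ per \<sigma> i) i = i"
proof -
  have "\<exists>d. 0 < d \<and> (\<sigma> ^^ d) i = i" using permutation_self[OF assms] by metis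
  then show ?thesis unfolding per_def by (rule LeastI_ex)
qed

lemma per_min:
  assumes "0 < k" "k < per \<sigma> i" shows "(\<sigma> ^^ k) i \<noteq> i"
  using assms not_less_Least unfolding per_def by blast

lemma funpow_mult_per:
  assumes "permutation \<sigma>" shows "(\<sigma> ^^ (q * per \<sigma> i)) i = i"
proof (induction q)
  case 0 then show ?case by simp
next
  case (Suc q)
  have "(\<sigma> ^^ (Suc q * per \<sigma> i)) i = (\<sigma> ^^ per \<sigma> i) ((\<sigma> ^^ (q * per \<sigma> i)) i)"
    by (simp add: funpow_add)
  then show ?case using Suc per_props[OF assms] by simp
qed

lemma funpow_mod_per:
  assumes "permutation \<sigma>" shows "(\<sigma> ^^ k) i = (\<sigma> ^^ (k mod per \<sigma> i)) i"
proof -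
  have "k = k mod per \<sigma> i + (k div per \<sigma> i) * per \<sigma> i" by (metis mod_div_mult_eq add.commute)
  then have "(\<sigma> ^^ k) i = (\<sigma> ^^ (k mod per \<sigma> i)) ((\<sigma> ^^ ((k div per \<sigma> i) * per \<sigma> i)) i)"
    by (metis comp_apply funpow_add)
  then show ?thesis using funpow_mult_per[OF assms] by simp
qed

lemma per_dvd:
  assumes "permutation \<sigma>" shows "(\<sigma> ^^ k) i = i \<longleftrightarrow> per \<sigma> i dvd k"
proof
  assume h: "(\<sigma> ^^ k) i = i"
  have "(\<sigma> ^^ (k mod per \<sigma> i)) i = i" using h funpow_mod_per[OF assms, of k i] by simp
  moreover have "k mod per \<sigma> i < per \<sigma> i" using per_props[OF assms] by simp
  ultimately have "k mod per \<sigma> i = 0" using per_min by (metis neq0_conv)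
  then show "per \<sigma> i dvd k" by auto
next
  assume "per \<sigma> i dvd k"
  then obtain q where "k = q * per \<sigma> i" by (auto simp: dvd_def mult.commute)
  then show "(\<sigma> ^^ k) i = i" using funpow_mult_per[OF assms] by simp
qed

lemma orbit_image:
  assumes "permutation \<sigma>"
  shows "{(\<sigma> ^^ k) i | k. True} = (\<lambda>l. (\<sigma> ^^ l) i) ` {..<per \<sigma> i}"
proof -
  have "(\<sigma> ^^ k) i \<in> (\<lambda>l. (\<sigma> ^^ l) i) ` {..<per \<sigma> i}" for k
    using funpow_mod_per[OF assms, of k i] per_props[OF assms, of i] by auto
  then show ?thesis by auto
qed

lemma orbit_inj:
  assumes "permutation \<sigma>"
  shows "inj_on (\<lambda>l. (\<sigma> ^^ l) i) {..<per \<sigma> i}"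
proof (rule inj_onI)
  fix a b assume ab: "a \<in> {..<per \<sigma> i}" "b \<in> {..<per \<sigma> i}" "(\<sigma> ^^ a) i = (\<sigma> ^^ b) i"
  have injs: "inj (\<sigma> ^^ m)" for m using assms bij_is_inj permutation_bijective inj_fn by blast
  show "a = b"
  proof (rule ccontr)
    assume "a \<noteq> b"
    then consider "a < b" | "b < a" by linarith
    then show False
    proof cases
      case 1
      have "(\<sigma> ^^ a) ((\<sigma> ^^ (b - a)) i) = (\<sigma> ^^ a) i"
        using ab(3) 1 by (metis add_diff_inverse_nat comp_apply funpow_add not_less_iff_gr_or_eq)
      then have "(\<sigma> ^^ (b - a)) i = i" using injs by (meson injD)
      moreover have "b-a < per \<sigma> i" "0 < b-a" using ab 1 by auto
      ultimately show False using per_min[of "b-a" \<sigma> i] by blast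
    next
      case 2
      have "(\<sigma> ^^ b) ((\<sigma> ^^ (a - b)) i) = (\<sigma> ^^ b) i"
        using ab(3) 2 by (metis add_diff_inverse_nat comp_apply funpow_add not_less_iff_gr_or_eq)
      then have "(\<sigma> ^^ (a - b)) i = i" using injs by (meson injD)
      moreover have "a-b < per \<sigma> i" "0 < a-b" using ab 2 by auto
      ultimately show False using per_min[of "a-b" \<sigma> i] by blast
    qed
  qed
qed

lemma card_orbit:
  assumes "permutation \<sigma>"
  shows "card {(\<sigma> ^^ k) i | k. True} = per \<sigma> i"
  using orbit_image[OF assms] orbit_inj[OF assms] by (simp add: card_image)

lemma sum_orbit:
  assumes "permutation \<sigma>"
  shows "(\<Sum>j\<in>{(\<sigma> ^^ k) i | k. True}. f j) = (\<Sum>l<per \<sigma> i. f ((\<sigma> ^^ l) i))"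
  using orbit_image[OF assms] orbit_inj[OF assms] by (simp add: sum.reindex)

lemma sum_mult_per:
  fixes f :: "nat \<Rightarrow> int"
  assumes "permutation \<sigma>"
  shows "(\<Sum>l<q * per \<sigma> i. f ((\<sigma> ^^ l) i)) = int q * (\<Sum>l<per \<sigma> i. f ((\<sigma> ^^ l) i))"
proof (induction q)
  case 0 then show ?case by simp
next
  case (Suc q)
  let ?d = "per \<sigma> i"
  have "(\<Sum>l<Suc q * ?d. f ((\<sigma> ^^ l) i)) = (\<Sum>l<q * ?d + ?d. f ((\<sigma> ^^ l) i))"
    by (simp add: add.commute)
  also have "\<dots> = (\<Sum>l<q * ?d. f ((\<sigma> ^^ l) i)) + (\<Sum>l=q * ?d..<q * ?d + ?d. f ((\<sigma> ^^ l) i))"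
    by (metis atLeast0LessThan le_add1 le0 sum.atLeastLessThan_concat)
  also have "(\<Sum>l=q * ?d..<q * ?d + ?d. f ((\<sigma> ^^ l) i)) = (\<Sum>l=0..<?d. f ((\<sigma> ^^ (l + q * ?d)) i))"
    using sum.shift_bounds_nat_ivl[of "\<lambda>l. f ((\<sigma> ^^ l) i)" 0 "q * ?d" ?d] by (simp add: add.commute)
  also have "\<dots> = (\<Sum>l<?d. f ((\<sigma> ^^ l) i))"
  proof -
    have "(\<sigma> ^^ (l + q * ?d)) i = (\<sigma> ^^ l) i" for l
      using funpow_mult_per[OF assms, of q i] by (simp add: funpow_add)
    then show ?thesis by (simp add: atLeast0LessThan)
  qed
  finally show ?case using Suc by (simp add: algebra_simps)
qed



lemma counting:
  fixes c :: "nat \<times> nat \<Rightarrow> nat \<times> nat" and tc :: "nat \<Rightarrow> int" and Z :: nat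
  assumes bij: "bij_betw c (Xn n) (Xn n)"
    and Z1: "Z \<ge> 1"
    and tail: "\<And>i m. i \<in> {1..n} \<Longrightarrow> m \<ge> Z \<Longrightarrow> c (i, m) = (i, nat (int m + tc i))"
    and PX: "P \<subseteq> Xn n" and cP: "c ` P = P"
    and RI: "R \<subseteq> {1..n}"
    and Ptail: "\<And>i m. i \<in> {1..n} \<Longrightarrow> m \<ge> Z \<Longrightarrow> (i, m) \<in> P \<longleftrightarrow> i \<in> R"
  shows "(\<Sum>i\<in>R. tc i) = 0"
proof -
  define K where "K = (\<Sum>i\<in>{1..n}. \<bar>tc i\<bar>)"
  have K: "\<bar>tc i\<bar> \<le> K" if "i \<in> {1..n}" for i
    unfolding K_def using that by (intro member_le_sum) auto
  define N :: nat where "N = Z + nat K + 1"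
  have inj: "inj_on c (Xn n)" using bij bij_betw_imp_inj_on by blast
  define S where "S a = {p \<in> P. int (snd p) < a (fst p)}" for a :: "nat \<Rightarrow> int"
  define S0 where "S0 = {p \<in> P. snd p < Z}"
  have Xn_iff: "p \<in> Xn n \<longleftrightarrow> fst p \<in> {1..n} \<and> snd p \<ge> 1" for p
    by (cases p) (auto simp: Xn_def)
  have finS0: "finite S0"
  proof -
    have "S0 \<subseteq> {1..n} \<times> {..<Z}" using PX Xn_iff unfolding S0_def by force
    then show ?thesis by (rule finite_subset) auto
  qed
  have cardS: "card (S a) = card S0 + (\<Sum>i\<in>R. nat (a i) - Z)"
    if a: "\<And>i. i \<in> {1..n} \<Longrightarrow> a i \<ge> int Z" for a
  proof -
    have eq: "S a = S0 \<union> (SIGMA i:R. {Z..<nat (a i)})"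
    proof (intro equalityI subsetI)
      fix p assume p: "p \<in> S a"
      obtain i m where pim: "p = (i, m)" by (cases p)
      have i: "i \<in> {1..n}" and "m \<ge> 1" using p PX Xn_iff unfolding S_def pim by auto
      show "p \<in> S0 \<union> (SIGMA i:R. {Z..<nat (a i)})"
      proof (cases "m < Z")
        case True then show ?thesis using p unfolding S_def S0_def pim by auto
      next
        case False
        then have "i \<in> R" using Ptail[OF i, of m] p unfolding S_def pim by auto
        then show ?thesis using p False unfolding S_def pim by auto
      qed
    next
      fix p assume p: "p \<in> S0 \<union> (SIGMA i:R. {Z..<nat (a i)})"
      obtain i m where pim: "p = (i, m)" by (cases p)
      show "p \<in> S a"
      proof (cases "p \<in> S0")
        case True
        then have i: "i \<in> {1..n}" using PX Xn_iff unfolding S0_def pim by auto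
        show ?thesis using True a[OF i] unfolding S_def S0_def pim by auto
      next
        case False
        then have iR: "i \<in> R" and m: "Z \<le> m" "m < nat (a i)" using p pim by auto
        have i: "i \<in> {1..n}" using iR RI by auto
        show ?thesis using Ptail[OF i m(1)] iR m unfolding S_def pim by auto
      qed
    qed
    have disj: "S0 \<inter> (SIGMA i:R. {Z..<nat (a i)}) = {}" unfolding S0_def by auto
    have finR: "finite R" using RI finite_subset by blast
    have "card (S a) = card S0 + card (SIGMA i:R. {Z..<nat (a i)})"
      unfolding eq using disj finS0 finR by (intro card_Un_disjoint) auto
    also have "card (SIGMA i:R. {Z..<nat (a i)}) = (\<Sum>i\<in>R. nat (a i) - Z)"
      using finR by (simp add: card_SigmaI)
    finally show ?thesis .
  qed
  have img: "c ` S (\<lambda>_. int N) = S (\<lambda>i. int N + tc i)"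
  proof (intro equalityI subsetI)
    fix q assume "q \<in> c ` S (\<lambda>_. int N)"
    then obtain p where p: "p \<in> P" "snd p < N" and q: "q = c p" unfolding S_def by auto
    obtain i m where pim: "p = (i, m)" by (cases p)
    have i: "i \<in> {1..n}" and m1: "m \<ge> 1" using p PX Xn_iff unfolding pim by auto
    have qP: "q \<in> P" using cP p q by blast
    obtain i' m' where qim: "q = (i', m')" by (cases q)
    have i': "i' \<in> {1..n}" using qP PX Xn_iff unfolding qim by auto
    show "q \<in> S (\<lambda>i. int N + tc i)"
    proof (cases "m \<ge> Z")
      case True
      have "q = (i, nat (int m + tc i))" using tail[OF i True] q pim by simp
      moreover have "int N + tc i > 0" using K[OF i] unfolding N_def by auto
      moreover have "int m < int N" using p pim by simp
      ultimately show ?thesis using qP unfolding S_def by auto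
    next
      case False
      show ?thesis
      proof (rule ccontr)
        assume "q \<notin> S (\<lambda>i. int N + tc i)"
        then have big: "int m' \<ge> int N + tc i'" using qP unfolding S_def qim by auto
        define m'' where "m'' = nat (int m' - tc i')"
        have "int m' - tc i' \<ge> int Z" using big K[OF i'] unfolding N_def by (auto split: if_splits)
        then have m'': "m'' \<ge> Z" "int m'' = int m' - tc i'" unfolding m''_def by auto
        have "c (i', m'') = q" using tail[OF i' m''(1)] m''(2) qim by simp
        moreover have "(i', m'') \<in> Xn n" using i' m'' Z1 Xn_iff by auto
        moreover have "p \<in> Xn n" using p PX by auto
        ultimately have "p = (i', m'')" using inj q by (auto dest: inj_onD)
        then show False using False m'' pim by auto
      qed
    qed
  next
    fix q assume qS: "q \<in> S (\<lambda>i. int N + tc i)"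
    then have qP: "q \<in> P" unfolding S_def by auto
    then obtain p where p: "p \<in> P" "q = c p" using cP by blast
    obtain i m where pim: "p = (i, m)" by (cases p)
    have i: "i \<in> {1..n}" using p PX Xn_iff unfolding pim by auto
    have "snd p < N"
    proof (cases "m \<ge> Z")
      case True
      have q: "q = (i, nat (int m + tc i))" using tail[OF i True] p pim by simp
      have "q \<in> Xn n" using qP PX by auto
      then have "snd q \<ge> 1" using Xn_iff by blast
      then have "int (snd q) = int m + tc i" using q by auto
      moreover have "int (snd q) < int N + tc i" using qS q unfolding S_def by auto
      ultimately show ?thesis using pim by simp
    next
      case False then show ?thesis using pim unfolding N_def by simp
    qed
    then show "q \<in> c ` S (\<lambda>_. int N)" using p unfolding S_def by auto
  qed
  have "card (S (\<lambda>_. int N)) = card (S (\<lambda>i. int N + tc i))"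
  proof -
    have "inj_on c (S (\<lambda>_. int N))" using inj PX unfolding S_def by (auto intro: inj_on_subset)
    then show ?thesis using img card_image by metis
  qed
  moreover have "card (S (\<lambda>_. int N)) = card S0 + (\<Sum>i\<in>R. nat (int N) - Z)"
    by (rule cardS) (auto simp: N_def)
  moreover have "card (S (\<lambda>i. int N + tc i)) = card S0 + (\<Sum>i\<in>R. nat (int N + tc i) - Z)"
    by (rule cardS) (use K in \<open>force simp: N_def\<close>)
  ultimately have e: "(\<Sum>i\<in>R. nat (int N) - Z) = (\<Sum>i\<in>R. nat (int N + tc i) - Z)" by simp
  have "int (\<Sum>i\<in>R. nat (int N) - Z) = (\<Sum>i\<in>R. int N - int Z)"
    by (simp add: of_nat_diff N_def)
  moreover have "int (\<Sum>i\<in>R. nat (int N + tc i) - Z) = (\<Sum>i\<in>R. int N - int Z + tc i)"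
  proof -
    have "int (nat (int N + tc i) - Z) = int N - int Z + tc i" if "i \<in> R" for i
    proof -
      have "int N + tc i \<ge> int Z" using K[of i] that RI unfolding N_def by auto
      then show ?thesis by (simp add: of_nat_diff)
    qed
    then show ?thesis by (simp add: of_nat_sum)
  qed
  ultimately have "(\<Sum>i\<in>R. int N - int Z) = (\<Sum>i\<in>R. int N - int Z + tc i)" using e by metis
  then show ?thesis by (simp add: sum.distrib)
qed



lemma Xn_iff: "p \<in> Xn n \<longleftrightarrow> fst p \<in> {1..n} \<and> snd p \<ge> 1"
  by (cases p) (auto simp: Xn_def)

lemma tH_spec:
  assumes "\<omega> \<in> Hn n" "i \<in> {1..n}"
  shows "\<exists>z\<ge>1. \<forall>m\<ge>z. \<omega> (i, m) = (i, nat (int m + tH i \<omega>)) \<and> int m + tH i \<omega> \<ge> 1"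
proof -
  have H: "\<forall>i\<in>{1..n}. \<exists>z::nat. z \<ge> 1 \<and> (\<exists>t::int. \<forall>m\<ge>z.
        fst (\<omega> (i, m)) = i \<and> int (snd (\<omega> (i, m))) = int m + t)"
    and bij: "bij_betw \<omega> (Xn n) (Xn n)"
    using assms(1) unfolding Hn_def by simp_all
  from bspec[OF H assms(2)] obtain z t where z: "z \<ge> 1"
    and zt: "\<And>m. m \<ge> z \<Longrightarrow> fst (\<omega> (i, m)) = i \<and> int (snd (\<omega> (i, m))) = int m + t"
    by blast
  have "tH i \<omega> = t"
    unfolding tH_def
  proof (rule the_equality)
    show "\<exists>z. \<forall>m\<ge>z. fst (\<omega> (i, m)) = i \<and> int (snd (\<omega> (i, m))) = int m + t" using zt by blast
  next
    fix t' assume "\<exists>z. \<forall>m\<ge>z. fst (\<omega> (i, m)) = i \<and> int (snd (\<omega> (i, m))) = int m + t'"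
    then obtain z' where z': "\<And>m. m \<ge> z' \<Longrightarrow> fst (\<omega> (i, m)) = i \<and> int (snd (\<omega> (i, m))) = int m + t'" by blast
    have "int (snd (\<omega> (i, max z z'))) = int (max z z') + t'" using z'[of "max z z'"] by simp
    moreover have "int (snd (\<omega> (i, max z z'))) = int (max z z') + t" using zt[of "max z z'"] by simp
    ultimately show "t' = t" by simp
  qed
  have "\<omega> (i, m) = (i, nat (int m + tH i \<omega>)) \<and> int m + tH i \<omega> \<ge> 1" if "m \<ge> z" for m
  proof -
    have "(i, m) \<in> Xn n" using assms(2) z that by (simp add: Xn_def)
    then have "\<omega> (i, m) \<in> Xn n" using bij by (rule bij_betw_apply[rotated])
    then have "snd (\<omega> (i, m)) \<ge> 1" by (simp add: Xn_iff)
    moreover have f: "fst (\<omega> (i, m)) = i" "int (snd (\<omega> (i, m))) = int m + t" using zt that by auto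
    ultimately have "int m + t \<ge> 1" by linarith
    moreover have "snd (\<omega> (i, m)) = nat (int m + t)" using f(2) by simp
    then have "\<omega> (i, m) = (i, nat (int m + t))" using f(1) by (metis prod.collapse)
    ultimately show ?thesis using \<open>tH i \<omega> = t\<close> by simp
  qed
  then show ?thesis using z by blast
qed

lemma uniform_tail:
  assumes "finite I" "\<And>i. i \<in> I \<Longrightarrow> \<exists>z\<ge>(1::nat). \<forall>m\<ge>z. Q i m"
  shows "\<exists>z\<ge>1. \<forall>i\<in>I. \<forall>m\<ge>z. Q i m"
proof -
  obtain zf where zf: "\<And>i. i \<in> I \<Longrightarrow> zf i \<ge> 1 \<and> (\<forall>m\<ge>zf i. Q i m)" using assms(2) by metis
  define z where "z = 1 + (\<Sum>i\<in>I. zf i)"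
  have "zf i \<le> z" if "i \<in> I" for i unfolding z_def using assms(1) that member_le_sum[of i I zf] by auto
  then have "\<forall>i\<in>I. \<forall>m\<ge>z. Q i m" using zf by (meson order.trans)
  then show ?thesis by (intro exI[of _ z]) (auto simp: z_def)
qed

lemma liftS_inj:
  assumes "\<sigma> permutes {1..n}" shows "inj (liftS n \<sigma>)"
proof (rule injI)
  fix p q assume e: "liftS n \<sigma> p = liftS n \<sigma> q"
  have si: "\<sigma> a \<in> {1..n} \<longleftrightarrow> a \<in> {1..n}" for a using assms by (rule permutes_in_image)
  have X: "x \<in> Xn n \<longleftrightarrow> fst x \<in> {1..n} \<and> snd x \<ge> 1" for x by (cases x) (simp add: Xn_def)
  show "p = q"
  proof (cases "p \<in> Xn n")
    case pT: True
    show ?thesis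
    proof (cases "q \<in> Xn n")
      case True
      then have "\<sigma> (fst p) = \<sigma> (fst q)" "snd p = snd q" using e pT by (simp_all add: liftS_def)
      then have "fst p = fst q" using permutes_inj[OF assms] by (simp add: inj_eq)
      then show ?thesis using \<open>snd p = snd q\<close> by (simp add: prod_eq_iff)
    next
      case False
      have "liftS n \<sigma> p \<in> Xn n" using pT si[of "fst p"] X[of p] X[of "(\<sigma> (fst p), snd p)"] by (simp add: liftS_def)
      then show ?thesis using e False by (simp add: liftS_def)
    qed
  next
    case pF: False
    show ?thesis
    proof (cases "q \<in> Xn n")
      case True
      have "liftS n \<sigma> q \<in> Xn n" using True si[of "fst q"] X[of q] X[of "(\<sigma> (fst q), snd q)"] by (simp add: liftS_def)
      then show ?thesis using e pF by (simp add: liftS_def)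
    next
      case False
      then show ?thesis using e pF by (simp add: liftS_def)
    qed
  qed
qed

lemma liftS_Xn:
  assumes "\<sigma> permutes {1..n}" "p \<in> Xn n" shows "liftS n \<sigma> p \<in> Xn n"
proof -
  have "fst p \<in> {1..n}" using assms(2) by (simp add: Xn_iff)
  then have "\<sigma> (fst p) \<in> {1..n}" using permutes_in_image[OF assms(1)] by simp
  then show ?thesis using assms(2) unfolding liftS_def by (simp add: Xn_iff)
qed

lemma decomp_unique:
  assumes "\<omega> \<in> Hn n" "\<omega>' \<in> Hn n" "\<sigma> permutes {1..n}" "\<sigma>' permutes {1..n}"
    and e: "prodHS n \<omega> \<sigma> = prodHS n \<omega>' \<sigma>'"
  shows "\<sigma> = \<sigma>' \<and> \<omega> = \<omega>'"
proof -
  have "\<sigma> i = \<sigma>' i" for i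
  proof (cases "i \<in> {1..n}")
    case True
    obtain z where z: "z \<ge> 1" "\<forall>m\<ge>z. \<omega> (i, m) = (i, nat (int m + tH i \<omega>)) \<and> int m + tH i \<omega> \<ge> 1"
      using tH_spec[OF assms(1) True] by blast
    obtain z' where z': "z' \<ge> 1" "\<forall>m\<ge>z'. \<omega>' (i, m) = (i, nat (int m + tH i \<omega>')) \<and> int m + tH i \<omega>' \<ge> 1"
      using tH_spec[OF assms(2) True] by blast
    define m where "m = max z z'"
    have "prodHS n \<omega> \<sigma> (i, m) = (\<sigma> i, nat (int m + tH i \<omega>))"
      using z True unfolding prodHS_def liftS_def m_def by (auto simp: Xn_def)
    moreover have "prodHS n \<omega>' \<sigma>' (i, m) = (\<sigma>' i, nat (int m + tH i \<omega>'))"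
      using z' True unfolding prodHS_def liftS_def m_def by (auto simp: Xn_def)
    ultimately show ?thesis using e by simp
  next
    case False then show ?thesis using permutes_not_in[OF assms(3) False] permutes_not_in[OF assms(4) False] by simp
  qed
  then have s: "\<sigma> = \<sigma>'" by blast
  have "\<omega> = \<omega>'"
  proof
    fix p
    have "liftS n \<sigma> (\<omega> p) = liftS n \<sigma> (\<omega>' p)"
      using fun_cong[OF e, of p] s unfolding prodHS_def by simp
    then show "\<omega> p = \<omega>' p" using liftS_inj[OF assms(3)] by (rule injD[rotated])
  qed
  then show ?thesis using s by blast
qed

lemma decomp:
  assumes "g \<in> HSn n"
  shows "\<exists>\<omega> \<sigma>. \<omega> \<in> Hn n \<and> \<sigma> permutes {1..n} \<and> g = prodHS n \<omega> \<sigma> \<and> sigma_of n g = \<sigma> \<and> omega_of n g = \<omega>"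
proof -
  obtain \<omega> \<sigma> where w: "\<omega> \<in> Hn n" "\<sigma> permutes {1..n}" "g = prodHS n \<omega> \<sigma>"
    using assms unfolding HSn_def by blast
  have "sigma_of n g = \<sigma>" unfolding sigma_of_def
  proof (rule the_equality)
    show "\<sigma> permutes {1..n} \<and> (\<exists>\<omega>\<in>Hn n. g = prodHS n \<omega> \<sigma>)" using w by blast
  next
    fix \<sigma>' assume "\<sigma>' permutes {1..n} \<and> (\<exists>\<omega>\<in>Hn n. g = prodHS n \<omega> \<sigma>')"
    then obtain \<omega>' where o: "\<sigma>' permutes {1..n}" "\<omega>' \<in> Hn n" "g = prodHS n \<omega>' \<sigma>'" by blast
    have "prodHS n \<omega> \<sigma> = prodHS n \<omega>' \<sigma>'" using o(3) w(3) by simp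
    from decomp_unique[OF w(1) o(2) w(2) o(1) this] show "\<sigma>' = \<sigma>" by simp
  qed
  moreover have "omega_of n g = \<omega>" unfolding omega_of_def
  proof (rule the_equality)
    show "\<omega> \<in> Hn n \<and> (\<exists>\<sigma>. \<sigma> permutes {1..n} \<and> g = prodHS n \<omega> \<sigma>)" using w by blast
  next
    fix \<omega>' assume "\<omega>' \<in> Hn n \<and> (\<exists>\<sigma>. \<sigma> permutes {1..n} \<and> g = prodHS n \<omega>' \<sigma>)"
    then obtain \<sigma>' where o: "\<sigma>' permutes {1..n}" "\<omega>' \<in> Hn n" "g = prodHS n \<omega>' \<sigma>'" by blast
    have "prodHS n \<omega> \<sigma> = prodHS n \<omega>' \<sigma>'" using o(3) w(3) by simp
    from decomp_unique[OF w(1) o(2) w(2) o(1) this] show "\<omega>' = \<omega>" by simp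
  qed
  ultimately show ?thesis using w by blast
qed

lemma iter_tail:
  fixes g :: "nat \<times> nat \<Rightarrow> nat \<times> nat" and tg :: "nat \<Rightarrow> int" and K :: int
  assumes sp: "\<sigma> permutes {1..n}" and Z1: "Zg \<ge> 1"
    and K: "\<And>i. i \<in> {1..n} \<Longrightarrow> \<bar>tg i\<bar> \<le> K"
    and gt: "\<And>i m. i \<in> {1..n} \<Longrightarrow> m \<ge> Zg \<Longrightarrow> g (i, m) = (\<sigma> i, nat (int m + tg i))"
  shows "i \<in> {1..n} \<Longrightarrow> int m \<ge> int Zg + int k * K \<Longrightarrow>
     (g ^^ k) (i, m) = ((\<sigma> ^^ k) i, nat (int m + (\<Sum>l<k. tg ((\<sigma> ^^ l) i))))
     \<and> int m + (\<Sum>l<k. tg ((\<sigma> ^^ l) i)) \<ge> int Zg"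
proof (induction k arbitrary: i m)
  case 0 then show ?case by simp
next
  case (Suc k)
  have K0: "K \<ge> 0" using K[OF Suc.prems(1)] by linarith
  have kK: "int (Suc k) * K \<ge> 0" "int k * K \<ge> 0" using K0 by simp_all
  have "int m \<ge> int Zg" using Suc.prems(2) kK by linarith
  then have mZ: "m \<ge> Zg" by simp
  have g1: "g (i, m) = (\<sigma> i, nat (int m + tg i))" using gt[OF Suc.prems(1) mZ] .
  have si: "\<sigma> i \<in> {1..n}" using permutes_in_image[OF sp] Suc.prems(1) by simp
  have x: "int m + tg i \<ge> int Zg + int k * K" using Suc.prems(2) K[OF Suc.prems(1)] by (simp add: algebra_simps)
  then have xn: "int (nat (int m + tg i)) = int m + tg i" using Z1 kK by linarith
  have IH: "(g ^^ k) (\<sigma> i, nat (int m + tg i)) = ((\<sigma> ^^ k) (\<sigma> i), nat (int m + tg i + (\<Sum>l<k. tg ((\<sigma> ^^ l) (\<sigma> i)))))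
     \<and> int m + tg i + (\<Sum>l<k. tg ((\<sigma> ^^ l) (\<sigma> i))) \<ge> int Zg"
    using Suc.IH[OF si, of "nat (int m + tg i)"] x xn by simp
  have sumeq: "(\<Sum>l<Suc k. tg ((\<sigma> ^^ l) i)) = tg i + (\<Sum>l<k. tg ((\<sigma> ^^ l) (\<sigma> i)))"
    unfolding sum.lessThan_Suc_shift by (simp add: funpow_swap1)
  have "(g ^^ Suc k) (i, m) = (g ^^ k) (g (i, m))" by (simp only: funpow_Suc_right comp_apply)
  then show ?case using IH g1 sumeq by (simp add: funpow_swap1 add.assoc)
qed



theorem lemma4p22:
  fixes n r u :: nat and g h x1 x2 :: "nat \<times> nat \<Rightarrow> nat \<times> nat" and js :: "nat \<Rightarrow> nat"
  assumes "n \<ge> 2" and "g \<in> HSn n" and "h \<in> HSn n" and "r \<ge> 1"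
    and "reps n g r js u"
    and "x1 \<in> Hn n" and "x2 \<in> Hn n"
    and "conj_eq n x1 g h" and "conj_eq n x2 g h"
  shows "(\<Sum>s=1..u. tH (js s) x1) = (\<Sum>s=1..u. tH (js s) x2)"
proof -
  note r1 = assms(4)
  obtain \<omega> \<sigma> where w: "\<omega> \<in> Hn n" "\<sigma> permutes {1..n}" "g = prodHS n \<omega> \<sigma>"
     "sigma_of n g = \<sigma>" "omega_of n g = \<omega>"
    using decomp[OF assms(2)] by blast
  have perm: "permutation \<sigma>" using w(2) permutation_permutes by blast
  define tg where "tg i = tH i \<omega>" for i
  have tG: "tG n i g = tg i" for i unfolding tG_def tg_def w(5) ..
  have clsd: "cls n g i = {(\<sigma> ^^ k) i | k. True}" for i unfolding cls_def w(4) ..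
  have si: "\<And>i. i \<in> {1..n} \<Longrightarrow> \<sigma> i \<in> {1..n}" using permutes_in_image[OF w(2)] by simp
  have bijw: "bij_betw \<omega> (Xn n) (Xn n)" using w(1) unfolding Hn_def by simp
  have gX: "\<And>p. p \<in> Xn n \<Longrightarrow> g p \<in> Xn n"
  proof -
    fix p assume "p \<in> Xn n"
    then have "\<omega> p \<in> Xn n" using bijw by (rule bij_betw_apply[rotated])
    then show "g p \<in> Xn n" unfolding w(3) prodHS_def using liftS_Xn[OF w(2)] by simp
  qed
  have gXk: "\<And>k p. p \<in> Xn n \<Longrightarrow> (g ^^ k) p \<in> Xn n"
  proof -
    fix k p assume "p \<in> Xn n" then show "(g ^^ k) p \<in> Xn n" by (induction k) (simp_all add: gX)
  qed
  obtain Zg where Zg: "Zg \<ge> 1" "\<forall>i\<in>{1..n}. \<forall>m\<ge>Zg. g (i, m) = (\<sigma> i, nat (int m + tg i))"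
  proof -
    have "\<exists>z\<ge>1. \<forall>i\<in>{1..n}. \<forall>m\<ge>z. g (i, m) = (\<sigma> i, nat (int m + tg i))"
    proof (rule uniform_tail)
      fix i assume i: "i \<in> {1..n}"
      obtain z where z: "z \<ge> 1" "\<forall>m\<ge>z. \<omega> (i, m) = (i, nat (int m + tH i \<omega>)) \<and> int m + tH i \<omega> \<ge> 1"
        using tH_spec[OF w(1) i] by blast
      have "g (i, m) = (\<sigma> i, nat (int m + tg i))" if "m \<ge> z" for m
      proof -
        have "(i, nat (int m + tg i)) \<in> Xn n" using z that i unfolding tg_def by (auto simp: Xn_def)
        then show ?thesis using z that unfolding w(3) prodHS_def liftS_def tg_def by simp
      qed
      then show "\<exists>z\<ge>1. \<forall>m\<ge>z. g (i, m) = (\<sigma> i, nat (int m + tg i))" using z(1) by blast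
    qed simp
    then show ?thesis using that by blast
  qed
  have gt: "\<And>i m. i \<in> {1..n} \<Longrightarrow> m \<ge> Zg \<Longrightarrow> g (i, m) = (\<sigma> i, nat (int m + tg i))"
    using Zg(2) by blast
  have bij1: "bij_betw x1 (Xn n) (Xn n)" using assms(6) unfolding Hn_def by simp
  have bij2: "bij_betw x2 (Xn n) (Xn n)" using assms(7) unfolding Hn_def by simp
  have inj2: "inj_on x2 (Xn n)" using bij2 by (rule bij_betw_imp_inj_on)
  define c where "c = inv_into (Xn n) x2 \<circ> x1"
  have bijc: "bij_betw c (Xn n) (Xn n)"
    unfolding c_def by (rule bij_betw_trans[OF bij1 bij_betw_inv_into[OF bij2]])
  have injc: "inj_on c (Xn n)" using bijc by (rule bij_betw_imp_inj_on)
  have cX: "\<And>p. p \<in> Xn n \<Longrightarrow> c p \<in> Xn n" using bijc bij_betw_apply by metis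
  define tc where "tc i = tH i x1 - tH i x2" for i
  obtain Zc where Zc: "Zc \<ge> 1" "\<forall>i\<in>{1..n}. \<forall>m\<ge>Zc. c (i, m) = (i, nat (int m + tc i)) \<and> int m + tc i \<ge> 1"
  proof -
    have "\<exists>z\<ge>1. \<forall>i\<in>{1..n}. \<forall>m\<ge>z. c (i, m) = (i, nat (int m + tc i)) \<and> int m + tc i \<ge> 1"
    proof (rule uniform_tail)
      fix i assume i: "i \<in> {1..n}"
      obtain z1 where z1: "z1 \<ge> 1" "\<forall>m\<ge>z1. x1 (i, m) = (i, nat (int m + tH i x1)) \<and> int m + tH i x1 \<ge> 1"
        using tH_spec[OF assms(6) i] by blast
      obtain z2 where z2: "z2 \<ge> 1" "\<forall>m\<ge>z2. x2 (i, m) = (i, nat (int m + tH i x2)) \<and> int m + tH i x2 \<ge> 1"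
        using tH_spec[OF assms(7) i] by blast
      define z where "z = z1 + z2 + nat \<bar>tH i x1\<bar> + nat \<bar>tH i x2\<bar>"
      have "c (i, m) = (i, nat (int m + tc i)) \<and> int m + tc i \<ge> 1" if m: "m \<ge> z" for m
      proof -
        have mz1: "m \<ge> z1" using m unfolding z_def by simp
        have a: "x1 (i, m) = (i, nat (int m + tH i x1))" using z1(2) mz1 by blast
        define m' where "m' = nat (int m + tH i x1 - tH i x2)"
        have m'i: "int m' = int m + tH i x1 - tH i x2" "m' \<ge> z2"
          using m unfolding m'_def z_def by linarith+
        have b: "x2 (i, m') = (i, nat (int m' + tH i x2))" using z2(2) m'i(2) by blast
        have "x2 (i, m') = x1 (i, m)" using a b m'i(1) by simp
        moreover have "(i, m') \<in> Xn n" using i m'i(2) z2(1) by (simp add: Xn_def)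
        ultimately have "c (i, m) = (i, m')" unfolding c_def using inv_into_f_f[OF inj2] by fastforce
        moreover have "int m + tc i \<ge> 1" using m'i z2(1) unfolding tc_def by linarith
        ultimately show ?thesis using m'i(1) unfolding tc_def m'_def by simp
      qed
      then show "\<exists>z\<ge>1. \<forall>m\<ge>z. c (i, m) = (i, nat (int m + tc i)) \<and> int m + tc i \<ge> 1"
        using z1(1) by (intro exI[of _ z]) (auto simp: z_def)
    qed simp
    then show ?thesis using that by blast
  qed
  have comm: "\<And>q. q \<in> Xn n \<Longrightarrow> c (g q) = g (c q)"
  proof -
    fix q assume q: "q \<in> Xn n"
    have x1q: "x1 q \<in> Xn n" using bij1 q by (rule bij_betw_apply)
    have inj1: "inj_on x1 (Xn n)" using bij1 by (rule bij_betw_imp_inj_on)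
    have "x1 (g (inv_into (Xn n) x1 (x1 q))) = h (x1 q)" using assms(8) x1q unfolding conj_eq_def by blast
    moreover have "x2 (g (inv_into (Xn n) x2 (x1 q))) = h (x1 q)" using assms(9) x1q unfolding conj_eq_def by blast
    moreover have "inv_into (Xn n) x1 (x1 q) = q" using inv_into_f_f[OF inj1 q] .
    ultimately have e: "x1 (g q) = x2 (g (c q))" unfolding c_def by simp
    have "g (c q) \<in> Xn n" using gX cX q by blast
    then have "inv_into (Xn n) x2 (x2 (g (c q))) = g (c q)" using inv_into_f_f[OF inj2] by blast
    then show "c (g q) = g (c q)" using e unfolding c_def by simp
  qed
  have commk: "\<And>k q. q \<in> Xn n \<Longrightarrow> c ((g ^^ k) q) = (g ^^ k) (c q)"
  proof -
    fix k q assume q: "q \<in> Xn n"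
    show "c ((g ^^ k) q) = (g ^^ k) (c q)"
    proof (induction k)
      case 0 then show ?case by simp
    next
      case (Suc k)
      have "c ((g ^^ Suc k) q) = c (g ((g ^^ k) q))" by simp
      also have "\<dots> = g (c ((g ^^ k) q))" using comm gXk[OF q] by blast
      finally show ?case using Suc by simp
    qed
  qed
  define P where "P = {p \<in> Xn n. (g ^^ r) p = p \<and> (\<forall>k. 0 < k \<and> k < r \<longrightarrow> (g ^^ k) p \<noteq> p)}"
  have fixc: "\<And>k p. p \<in> Xn n \<Longrightarrow> (g ^^ k) (c p) = c p \<longleftrightarrow> (g ^^ k) p = p"
  proof -
    fix k p assume p: "p \<in> Xn n"
    have "(g ^^ k) (c p) = c p \<longleftrightarrow> c ((g ^^ k) p) = c p" using commk[OF p] by simp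
    also have "\<dots> \<longleftrightarrow> (g ^^ k) p = p" using injc gXk[OF p] p by (auto dest: inj_onD)
    finally show "(g ^^ k) (c p) = c p \<longleftrightarrow> (g ^^ k) p = p" .
  qed
  have Pc: "\<And>p. p \<in> Xn n \<Longrightarrow> c p \<in> P \<longleftrightarrow> p \<in> P"
    unfolding P_def using fixc cX by simp
  have PX: "P \<subseteq> Xn n" unfolding P_def by blast
  have cP: "c ` P = P"
  proof (intro equalityI subsetI)
    fix q assume "q \<in> c ` P" then show "q \<in> P" using Pc PX by blast
  next
    fix q assume q: "q \<in> P"
    then have "q \<in> Xn n" using PX by blast
    then obtain p where p: "p \<in> Xn n" "q = c p" using bijc unfolding bij_betw_def by blast
    then show "q \<in> c ` P" using Pc q by blast
  qed
  define S where "S k i = (\<Sum>l<k. tg ((\<sigma> ^^ l) i))" for k i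
  define K where "K = (\<Sum>j\<in>{1..n}. \<bar>tg j\<bar>)"
  have K: "\<And>i. i \<in> {1..n} \<Longrightarrow> \<bar>tg i\<bar> \<le> K"
    unfolding K_def by (rule member_le_sum) auto
  have K0: "K \<ge> 0" unfolding K_def by (rule sum_nonneg) auto
  have tcls_eq: "tcls n g i = S (per \<sigma> i) i" for i
    unfolding tcls_def tG clsd S_def by (rule sum_orbit[OF perm])
  have card_cls: "card (cls n g i) = per \<sigma> i" for i
    unfolding clsd by (rule card_orbit[OF perm])
  define R where "R = Icr n g r"
  have Rd: "i \<in> R \<longleftrightarrow> i \<in> {1..n} \<and> S (per \<sigma> i) i = 0 \<and> per \<sigma> i = r" for i
    unfolding R_def Icr_def Ic_def using tcls_eq card_cls by simp
  have RI: "R \<subseteq> {1..n}" using Rd by blast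
  define Z0 where "Z0 = Zg + r * nat K"
  have fixk: "(g ^^ k) (i, m) = (i, m) \<longleftrightarrow> per \<sigma> i dvd k \<and> S (per \<sigma> i) i = 0"
    if i: "i \<in> {1..n}" and m: "m \<ge> Z0" and k: "0 < k" "k \<le> r" for i m k
  proof -
    have "int k * K \<le> int r * K" using k K0 by (simp add: mult_right_mono)
    also have "\<dots> = int (r * nat K)" using K0 by simp
    finally have "int m \<ge> int Zg + int k * K" using m unfolding Z0_def by linarith
    from iter_tail[OF w(2) Zg(1) K gt i this]
    have it: "(g ^^ k) (i, m) = ((\<sigma> ^^ k) i, nat (int m + S k i))" "int m + S k i \<ge> int Zg"
      unfolding S_def by auto
    have "(g ^^ k) (i, m) = (i, m) \<longleftrightarrow> (\<sigma> ^^ k) i = i \<and> S k i = 0"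
      using it Zg(1) by auto
    also have "\<dots> \<longleftrightarrow> per \<sigma> i dvd k \<and> S (per \<sigma> i) i = 0"
    proof (cases "per \<sigma> i dvd k")
      case True
      then obtain q where q: "k = q * per \<sigma> i" by (auto simp: dvd_def mult.commute)
      then have "q > 0" using k by (cases q) auto
      moreover have "S k i = int q * S (per \<sigma> i) i" unfolding q S_def by (rule sum_mult_per[OF perm])
      ultimately show ?thesis using True per_dvd[OF perm] by simp
    next
      case False then show ?thesis using per_dvd[OF perm] by simp
    qed
    finally show ?thesis .
  qed
  have Ptail: "(i, m) \<in> P \<longleftrightarrow> i \<in> R" if i: "i \<in> {1..n}" and m: "m \<ge> Z0" for i m
  proof -
    have X: "(i, m) \<in> Xn n" using i m Zg(1) unfolding Z0_def by (simp add: Xn_def)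
    have pp: "per \<sigma> i > 0" using per_props[OF perm] by blast
    have "(i, m) \<in> P \<longleftrightarrow> (per \<sigma> i dvd r \<and> S (per \<sigma> i) i = 0) \<and>
        (\<forall>k. 0 < k \<and> k < r \<longrightarrow> \<not> (per \<sigma> i dvd k \<and> S (per \<sigma> i) i = 0))"
      unfolding P_def using X fixk[OF i m] r1 by auto
    also have "\<dots> \<longleftrightarrow> S (per \<sigma> i) i = 0 \<and> per \<sigma> i = r"
    proof
      assume a: "(per \<sigma> i dvd r \<and> S (per \<sigma> i) i = 0) \<and>
        (\<forall>k. 0 < k \<and> k < r \<longrightarrow> \<not> (per \<sigma> i dvd k \<and> S (per \<sigma> i) i = 0))"
      then have "per \<sigma> i \<le> r" using r1 dvd_imp_le by auto
      moreover have "\<not> per \<sigma> i < r" using a pp by auto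
      ultimately show "S (per \<sigma> i) i = 0 \<and> per \<sigma> i = r" using a by auto
    next
      assume a: "S (per \<sigma> i) i = 0 \<and> per \<sigma> i = r"
      then show "(per \<sigma> i dvd r \<and> S (per \<sigma> i) i = 0) \<and>
        (\<forall>k. 0 < k \<and> k < r \<longrightarrow> \<not> (per \<sigma> i dvd k \<and> S (per \<sigma> i) i = 0))"
        using nat_dvd_not_less by auto
    qed
    finally show ?thesis using Rd i by blast
  qed
  have sumR: "(\<Sum>i\<in>R. tc i) = 0"
  proof (rule counting[OF bijc _ _ PX cP RI])
    show "max Z0 Zc \<ge> 1" using Zc(1) by simp
    show "c (i, m) = (i, nat (int m + tc i))" if "i \<in> {1..n}" "max Z0 Zc \<le> m" for i m
      using Zc(2) that by auto
    show "(i, m) \<in> P \<longleftrightarrow> i \<in> R" if "i \<in> {1..n}" "max Z0 Zc \<le> m" for i m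
      using Ptail that by auto
  qed
  have tcs: "tc (\<sigma> i) = tc i" if i: "i \<in> {1..n}" for i
  proof -
    define m where "m = Zg + Zc + nat \<bar>tg i\<bar> + nat \<bar>tc i\<bar>"
    have X: "(i, m) \<in> Xn n" using i Zg(1) unfolding m_def by (simp add: Xn_def)
    define a where "a = nat (int m + tg i)"
    have a: "int a = int m + tg i" "a \<ge> Zc" unfolding a_def m_def by linarith+
    have ga: "g (i, m) = (\<sigma> i, a)" unfolding a_def using gt[OF i] m_def by simp
    have ca: "c (\<sigma> i, a) = (\<sigma> i, nat (int a + tc (\<sigma> i)))" "int a + tc (\<sigma> i) \<ge> 1"
      using Zc(2) si[OF i] a(2) by blast+
    define b where "b = nat (int m + tc i)"
    have b: "int b = int m + tc i" "b \<ge> Zg" unfolding b_def m_def by linarith+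
    have cb: "c (i, m) = (i, b)" unfolding b_def using Zc(2) i m_def by simp
    have gb: "g (i, b) = (\<sigma> i, nat (int b + tg i))" using gt[OF i b(2)] .
    have "c (g (i, m)) = g (c (i, m))" using comm[OF X] .
    then have e: "nat (int a + tc (\<sigma> i)) = nat (int b + tg i)" using ga ca cb gb by simp
    then have "int a + tc (\<sigma> i) = int b + tg i" using ca(2) by linarith
    then show ?thesis using a(1) b(1) by simp
  qed
  have tck: "tc ((\<sigma> ^^ k) i) = tc i" if i: "i \<in> {1..n}" for k i
  proof (induction k)
    case 0 then show ?case by simp
  next
    case (Suc k)
    have "(\<sigma> ^^ k) i \<in> {1..n}" using permutes_in_funpow_image[OF w(2) i] .
    then show ?case using tcs Suc by simp
  qed
  have reps: "R = (\<Union>s\<in>{1..u}. cls n g (js s))"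
    "\<forall>s\<in>{1..u}. \<forall>s'\<in>{1..u}. s \<noteq> s' \<longrightarrow> cls n g (js s) \<inter> cls n g (js s') = {}"
    using assms(5) unfolding reps_def R_def by blast+
  have jsR: "js s \<in> R" if "s \<in> {1..u}" for s
  proof -
    have "js s \<in> cls n g (js s)" unfolding clsd by (rule CollectI, rule exI[of _ 0]) simp
    then show ?thesis using reps(1) that by blast
  qed
  have fincls: "finite (cls n g i)" for i unfolding clsd orbit_image[OF perm] by simp
  have "(\<Sum>i\<in>R. tc i) = (\<Sum>s\<in>{1..u}. (\<Sum>j\<in>cls n g (js s). tc j))"
    unfolding reps(1) by (rule sum.UNION_disjoint) (use fincls reps(2) in auto)
  also have "\<dots> = (\<Sum>s\<in>{1..u}. int r * tc (js s))"
  proof (rule sum.cong[OF refl])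
    fix s assume s: "s \<in> {1..u}"
    have j: "js s \<in> {1..n}" "per \<sigma> (js s) = r" using jsR[OF s] Rd by auto
    have "(\<Sum>j\<in>cls n g (js s). tc j) = (\<Sum>j\<in>cls n g (js s). tc (js s))"
      by (rule sum.cong[OF refl]) (auto simp: clsd tck[OF j(1)])
    also have "\<dots> = int (card (cls n g (js s))) * tc (js s)" by simp
    finally show "(\<Sum>j\<in>cls n g (js s). tc j) = int r * tc (js s)" using card_cls j(2) by simp
  qed
  also have "\<dots> = int r * (\<Sum>s\<in>{1..u}. tc (js s))" by (simp add: sum_distrib_left)
  finally have "int r * (\<Sum>s\<in>{1..u}. tc (js s)) = 0" using sumR by simp
  then have "(\<Sum>s\<in>{1..u}. tc (js s)) = 0" using r1 by simp
  then show ?thesis unfolding tc_def by (simp add: sum_subtractf)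
qed

end
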